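(* Let $A$ and $B$ be disjoint cubic graphs with $v(A)\equiv 2\pmod 6$ and $v(B)\equiv 2\pmod 6$, let $a=a_1a_2\in E(A)$ and $b=b_1b_2\in E(B)$, and let $G=Aa|bB$ with middle edge $z=z_1z_2$. Then $v(G)\equiv 0\pmod 6$ and $G$ has no $\Lambda$-factor containing the edge $z$.
   Context: Graphs are finite, undirected, without loops or multiple edges; $v(G)=|V(G)|$. For disjoint graphs $A,B$ with $a=a_1a_2\in E(A)$, $b=b_1b_2\in E(B)$, $AabB$ is obtained from $(A-a)\cup(B-b)$ (edge deletions) by adding the edges $a_1b_1,a_2b_2$; $Aa|bB$ is obtained from $AabB$ by replacing each edge $a_ib_i$ ($i=1,2$) by a path $a_iz_ib_i$ through a new vertex $z_i$ and adding the new edge $z=z_1z_2$, the middle edge. A $\Lambda$-factor of a graph is a spanning subgraph each of whose components is a path on 3 vertices. *)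

theory Defs
  imports Main
begin

type_synonym 'a graph = "'a set \<times> 'a set set"

definition verts :: "'a graph \<Rightarrow> 'a set" where "verts G = fst G"
definition edges :: "'a graph \<Rightarrow> 'a set set" where "edges G = snd G"

definition is_graph :: "'a graph \<Rightarrow> bool" where
  "is_graph G \<longleftrightarrow> finite (verts G) \<and>
     (\<forall>e\<in>edges G. \<exists>u w. u \<noteq> w \<and> u \<in> verts G \<and> w \<in> verts G \<and> e = {u, w})"

definition degree :: "'a graph \<Rightarrow> 'a \<Rightarrow> nat" where
  "degree G v = card {e \<in> edges G. v \<in> e}"

definition cubic :: "'a graph \<Rightarrow> bool" where
  "cubic G \<longleftrightarrow> is_graph G \<and> (\<forall>v\<in>verts G. degree G v = 3)"

text \<open>The graph A a|b B with middle edge z1 z2, where z1, z2 are the new vertices.\<close>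
definition bridge_join ::
  "'a graph \<Rightarrow> 'a \<Rightarrow> 'a \<Rightarrow> 'a graph \<Rightarrow> 'a \<Rightarrow> 'a \<Rightarrow> 'a \<Rightarrow> 'a \<Rightarrow> 'a graph" where
  "bridge_join A a1 a2 B b1 b2 z1 z2 =
     (verts A \<union> verts B \<union> {z1, z2},
      (edges A - {{a1, a2}}) \<union> (edges B - {{b1, b2}}) \<union>
      {{a1, z1}, {z1, b1}, {a2, z2}, {z2, b2}, {z1, z2}})"

definition component :: "'a set set \<Rightarrow> 'a \<Rightarrow> 'a set" where
  "component F v = {u. (\<lambda>x y. {x, y} \<in> F)\<^sup>*\<^sup>* v u}"

text \<open>F is (the edge set of) a Lambda-factor of G: a spanning subgraph (verts G, F)
  each of whose components is a path on 3 vertices.\<close>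
definition Lambda_factor :: "'a graph \<Rightarrow> 'a set set \<Rightarrow> bool" where
  "Lambda_factor G F \<longleftrightarrow> F \<subseteq> edges G \<and>
     (\<forall>v\<in>verts G. \<exists>x y w. x \<noteq> y \<and> y \<noteq> w \<and> x \<noteq> w \<and>
        component F v = {x, y, w} \<and>
        {e \<in> F. e \<subseteq> {x, y, w}} = {{x, y}, {y, w}})"

end

theory Submission
  imports Defs
begin

lemma R_sym: "(\<lambda>x y. {x, y} \<in> F)\<inverse>\<inverse> = (\<lambda>x y. {x, y} \<in> F)"
  by (auto simp: fun_eq_iff insert_commute)

lemma comp_refl: "v \<in> component F v"
  by (simp add: component_def)

lemma comp_sym: "u \<in> component F v \<Longrightarrow> v \<in> component F u"
proof -
  assume "u \<in> component F v"
  hence "(\<lambda>x y. {x, y} \<in> F)\<^sup>*\<^sup>* v u" by (simp add: component_def)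
  hence "(\<lambda>x y. {x, y} \<in> F)\<^sup>*\<^sup>* u v"
    by (induction rule: rtranclp_induct)
       (simp, metis (no_types, lifting) converse_rtranclp_into_rtranclp insert_commute)
  thus ?thesis by (simp add: component_def)
qed

lemma comp_trans: "u \<in> component F v \<Longrightarrow> w \<in> component F u \<Longrightarrow> w \<in> component F v"
  unfolding component_def by auto

lemma comp_eq: "u \<in> component F v \<Longrightarrow> component F u = component F v"
  by (meson comp_sym comp_trans subsetI subset_antisym)

lemma comp_sub:
  assumes H: "\<And>x y. {x, y} \<in> F \<Longrightarrow> x \<in> X \<Longrightarrow> y \<in> X \<or> y \<in> Z"
    and Z: "\<And>z. z \<in> Z \<Longrightarrow> component F z \<inter> X = {}"
    and v: "v \<in> X"
  shows "component F v \<subseteq> X"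
proof
  fix u assume "u \<in> component F v"
  hence "(\<lambda>x y. {x, y} \<in> F)\<^sup>*\<^sup>* v u" by (simp add: component_def)
  thus "u \<in> X"
  proof (induction rule: rtranclp_induct)
    case base then show ?case using v by simp
  next
    case (step y w)
    from H[OF step(2) step(3)] show ?case
    proof
      assume "w \<in> Z"
      have "w \<in> component F v" using step(1,2)
        by (simp add: component_def rtranclp.rtrancl_into_rtrancl)
      hence "v \<in> component F w" by (rule comp_sym)
      with Z[OF \<open>w \<in> Z\<close>] v show ?thesis by blast
    qed
  qed
qed

lemma part3:
  assumes "finite X" and "\<And>v. v \<in> X \<Longrightarrow> component F v \<subseteq> X \<and> card (component F v) = 3"
  shows "card X mod 3 = 0"
proof -
  let ?C = "component F ` X"
  have U: "\<Union> ?C = X"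
  proof
    show "\<Union> ?C \<subseteq> X" using assms(2) by auto
    show "X \<subseteq> \<Union> ?C"
    proof
      fix v assume "v \<in> X" thus "v \<in> \<Union> ?C" using comp_refl[of v F] by auto
    qed
  qed
  have "3 * card ?C = card (\<Union> ?C)"
  proof (rule card_partition)
    show "finite ?C" using assms(1) by simp
    show "finite (\<Union> ?C)" using U assms(1) by simp
    show "\<And>c. c \<in> ?C \<Longrightarrow> card c = 3" using assms(2) by auto
    fix c1 c2 assume c: "c1 \<in> ?C" "c2 \<in> ?C" "c1 \<noteq> c2"
    then obtain v1 v2 where v: "c1 = component F v1" "c2 = component F v2" by auto
    show "c1 \<inter> c2 = {}"
    proof (rule ccontr)
      assume "c1 \<inter> c2 \<noteq> {}"
      then obtain w where "w \<in> c1" "w \<in> c2" by auto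
      hence "component F w = c1" "component F w = c2" using v comp_eq[of w F v1] comp_eq[of w F v2] by simp_all
      thus False using c(3) by simp
    qed
  qed
  hence "card X = 3 * card ?C" using U by simp
  thus ?thesis by simp
qed

lemma three: assumes "x \<noteq> y" "y \<noteq> w" "x \<noteq> w" "z1 \<in> {x,y,w::'a}" "z2 \<in> {x,y,w}" "z1 \<noteq> z2"
  shows "\<exists>t. {x,y,w} = {z1,z2,t}"
  using assms by (smt (verit) insert_commute insertE singletonD)

lemma graph_edge:
  assumes "is_graph G" "{x, y} \<in> edges G"
  shows "x \<in> verts G" "y \<in> verts G"
  using assms unfolding is_graph_def by (metis doubleton_eq_iff)+

theorem mainTheorem9:
  fixes A B :: "'a graph" and a1 a2 b1 b2 z1 z2 :: 'a
  assumes "cubic A" and "cubic B"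
    and "verts A \<inter> verts B = {}"
    and "card (verts A) mod 6 = 2" and "card (verts B) mod 6 = 2"
    and "{a1, a2} \<in> edges A" and "{b1, b2} \<in> edges B"
    and "z1 \<notin> verts A \<union> verts B" and "z2 \<notin> verts A \<union> verts B" and "z1 \<noteq> z2"
  shows "card (verts (bridge_join A a1 a2 B b1 b2 z1 z2)) mod 6 = 0
    \<and> \<not> (\<exists>F. Lambda_factor (bridge_join A a1 a2 B b1 b2 z1 z2) F \<and> {z1, z2} \<in> F)"
proof -
  let ?G = "bridge_join A a1 a2 B b1 b2 z1 z2"
  have gA: "is_graph A" and gB: "is_graph B" using assms(1,2) by (auto simp: cubic_def)
  have fA: "finite (verts A)" and fB: "finite (verts B)" using gA gB by (auto simp: is_graph_def)
  have a: "a1 \<in> verts A" "a2 \<in> verts A" using graph_edge[OF gA assms(6)] by auto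
  have b: "b1 \<in> verts B" "b2 \<in> verts B" using graph_edge[OF gB assms(7)] by auto
  have VG: "verts ?G = verts A \<union> verts B \<union> {z1, z2}" by (simp add: bridge_join_def verts_def)
  have EG: "edges ?G = (edges A - {{a1, a2}}) \<union> (edges B - {{b1, b2}}) \<union>
      {{a1, z1}, {z1, b1}, {a2, z2}, {z2, b2}, {z1, z2}}" by (simp add: bridge_join_def edges_def)
  have "card (verts ?G) = card (verts A) + card (verts B) + 2"
    using VG fA fB assms(3,8,9,10) by (simp add: card_Un_disjoint)
  hence P1: "card (verts ?G) mod 6 = 0" using assms(4,5) by presburger
  have P2: False if LF: "Lambda_factor ?G F" and zF: "{z1, z2} \<in> F" for F
  proof -
    have FE: "F \<subseteq> edges ?G" using LF by (simp add: Lambda_factor_def)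
    have z1G: "z1 \<in> verts ?G" using VG by simp
    obtain x y w where xyw: "x \<noteq> y" "y \<noteq> w" "x \<noteq> w" "component F z1 = {x, y, w}"
      "{e \<in> F. e \<subseteq> {x, y, w}} = {{x, y}, {y, w}}"
      using LF z1G unfolding Lambda_factor_def by blast
    have z2c: "z2 \<in> component F z1" using zF by (simp add: component_def r_into_rtranclp)
    have "z1 \<in> component F z1" by (rule comp_refl)
    then obtain t where C: "component F z1 = {z1, z2, t}"
      using three[OF xyw(1,2,3), of z1 z2] z2c xyw(4) assms(10) by metis
    have C2: "component F z2 = {z1, z2, t}" using comp_eq[OF z2c] C by simp
    have card3: "card (component F v) = 3" if "v \<in> verts ?G" for v
      using LF that unfolding Lambda_factor_def by force
    have side: "card X mod 3 = 0" if X: "X \<subseteq> verts ?G" "finite X" "t \<notin> X" "z1 \<notin> X" "z2 \<notin> X"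
      and H: "\<And>x y. {x, y} \<in> F \<Longrightarrow> x \<in> X \<Longrightarrow> y \<in> X \<or> y \<in> {z1, z2}" for X
    proof (rule part3[OF X(2)])
      fix v assume v: "v \<in> X"
      have "component F v \<subseteq> X"
        by (rule comp_sub[OF H _ v]) (use C C2 X in auto)
      thus "component F v \<subseteq> X \<and> card (component F v) = 3" using card3 v X(1) by auto
    qed
    have eA: "\<And>x y. {x, y} \<in> edges A \<Longrightarrow> x \<in> verts A \<and> y \<in> verts A"
      using graph_edge[OF gA] by blast
    have eB: "\<And>x y. {x, y} \<in> edges B \<Longrightarrow> x \<in> verts B \<and> y \<in> verts B"
      using graph_edge[OF gB] by blast
    have nAB: "a1 \<notin> verts B" "a2 \<notin> verts B" "b1 \<notin> verts A" "b2 \<notin> verts A"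
      using a b assms(3) by blast+
    have zz: "z1 \<notin> verts A" "z1 \<notin> verts B" "z2 \<notin> verts A" "z2 \<notin> verts B"
      using assms(8,9) by blast+
    have HB: "y \<in> verts B \<or> y \<in> {z1, z2}" if "{x, y} \<in> F" "x \<in> verts B" for x y
    proof -
      have "{x, y} \<in> edges ?G" using that FE by auto
      hence "{x, y} \<in> edges A \<or> {x, y} \<in> edges B \<or> {x, y} = {a1, z1} \<or> {x, y} = {z1, b1}
        \<or> {x, y} = {a2, z2} \<or> {x, y} = {z2, b2} \<or> {x, y} = {z1, z2}" unfolding EG
        by (simp only: Un_iff Diff_iff insert_iff empty_iff) meson
      thus ?thesis
      proof (elim disjE)
        assume h: "{x, y} \<in> edges A" thus ?thesis using eA[OF h] that(2) assms(3) by blast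
      next
        assume h: "{x, y} \<in> edges B" thus ?thesis using eB[OF h] that(2) assms(3) by blast
      qed (use that(2) nAB zz in \<open>auto simp: doubleton_eq_iff\<close>)
    qed
    have HA: "y \<in> verts A \<or> y \<in> {z1, z2}" if "{x, y} \<in> F" "x \<in> verts A" for x y
    proof -
      have "{x, y} \<in> edges ?G" using that FE by auto
      hence "{x, y} \<in> edges A \<or> {x, y} \<in> edges B \<or> {x, y} = {a1, z1} \<or> {x, y} = {z1, b1}
        \<or> {x, y} = {a2, z2} \<or> {x, y} = {z2, b2} \<or> {x, y} = {z1, z2}" unfolding EG
        by (simp only: Un_iff Diff_iff insert_iff empty_iff) meson
      thus ?thesis
      proof (elim disjE)
        assume h: "{x, y} \<in> edges A" thus ?thesis using eA[OF h] that(2) assms(3) by blast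
      next
        assume h: "{x, y} \<in> edges B" thus ?thesis using eB[OF h] that(2) assms(3) by blast
      qed (use that(2) nAB zz in \<open>auto simp: doubleton_eq_iff\<close>)
    qed
    show False
    proof (cases "t \<in> verts B")
      case True
      hence tA: "t \<notin> verts A" using assms(3) by blast
      have sA: "verts A \<subseteq> verts ?G" using VG by blast
      have "card (verts A) mod 3 = 0" by (rule side[OF sA fA tA zz(1) zz(3) HA])
      thus False using assms(4) by presburger
    next
      case False
      have sB: "verts B \<subseteq> verts ?G" using VG by blast
      have "card (verts B) mod 3 = 0" by (rule side[OF sB fB False zz(2) zz(4) HB])
      thus False using assms(5) by presburger
    qed
  qed
  show ?thesis using P1 P2 by blast
qed

end
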